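(* Fix real numbers $L,\ell_1,\ell_2>0$. The mapping $(\phi_1,\phi_2)\mapsto\phi_1\otimes\phi_2$ induces a continuous bijection \[\bigsqcup_{\substack{\ell'_1>0,\ \ell'_2>0\\ \ell'_1+\ell'_2=L}}\mathcal{G}(\ell'_1,\ell_1)\times\mathcal{G}(\ell'_2,\ell_2)\longrightarrow\mathcal{G}(L,\ell_1+\ell_2)\] which is not a homeomorphism.
   Context: $\mathcal{G}$ is the category whose objects are the real numbers $\ell>0$, with $\mathcal{G}(\ell_1,\ell_2)$ the set of nondecreasing homeomorphisms $[0,\ell_1]\to[0,\ell_2]$ (necessarily sending $0\mapsto0$, $\ell_1\mapsto\ell_2$), equipped with the compact-open topology, and composition given by composition of maps. For $\phi_i:[0,\ell_i]\to[0,\ell'_i]$ ($i=1,2$), $\phi_1\otimes\phi_2:[0,\ell_1+\ell_2]\to[0,\ell'_1+\ell'_2]$ is defined by $(\phi_1\otimes\phi_2)(t)=\phi_1(t)$ for $0\le t\le\ell_1$ and $\phi_2(t-\ell_1)+\ell'_1$ for $\ell_1\le t\le\ell_1+\ell_2$; on objects $\ell\otimes\ell'=\ell+\ell'$. The disjoint union on the left carries the disjoint union topology over the index set (indexed by the pairs $(\ell'_1,\ell'_2)$). *)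

theory Defs
  imports "HOL-Analysis.Analysis" "HOL-Library.FuncSet"
begin

definition compact_open_topology :: "'a topology \<Rightarrow> 'b topology \<Rightarrow> ('a \<Rightarrow> 'b) topology" where
  "compact_open_topology X Y =
     subtopology
       (topology_generated_by {{f. f ` K \<subseteq> U} | K U. compactin X K \<and> openin Y U})
       (topspace X \<rightarrow>\<^sub>E topspace Y)"

text \<open>Morphisms G(l1,l2): nondecreasing homeomorphisms [0,l1] \<rightarrow> [0,l2], represented
  as extensional functions (undefined outside [0,l1]).\<close>
definition Gmor :: "real \<Rightarrow> real \<Rightarrow> (real \<Rightarrow> real) set" where
  "Gmor l1 l2 = {f \<in> {0..l1} \<rightarrow>\<^sub>E {0..l2}.
      mono_on {0..l1} f \<and>
      homeomorphic_map (top_of_set {0..l1}) (top_of_set {0..l2}) f}"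

definition Gtop :: "real \<Rightarrow> real \<Rightarrow> (real \<Rightarrow> real) topology" where
  "Gtop l1 l2 = subtopology
     (compact_open_topology (top_of_set {0..l1}) (top_of_set {0..l2})) (Gmor l1 l2)"

definition Gtensor :: "real \<Rightarrow> real \<Rightarrow> real \<Rightarrow> (real \<Rightarrow> real) \<Rightarrow> (real \<Rightarrow> real) \<Rightarrow> (real \<Rightarrow> real)" where
  "Gtensor l1 l1' l2 phi1 phi2 =
     restrict (\<lambda>t. if t \<le> l1 then phi1 t else phi2 (t - l1) + l1') {0..l1 + l2}"

end

theory Submission
  imports Defs
begin

lemma Gmor_iff:
  assumes "L > 0" "M > 0"
  shows "f \<in> Gmor L M \<longleftrightarrow> f \<in> extensional {0..L} \<and> continuous_on {0..L} f
     \<and> strict_mono_on {0..L} f \<and> f 0 = 0 \<and> f L = M"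
proof
  assume f: "f \<in> Gmor L M"
  then have fE: "f \<in> {0..L} \<rightarrow>\<^sub>E {0..M}" and mo: "mono_on {0..L} f"
    and h: "homeomorphic_map (top_of_set {0..L}) (top_of_set {0..M}) f"
    by (auto simp: Gmor_def)
  have cont: "continuous_on {0..L} f"
    using homeomorphic_imp_continuous_map[OF h] by (simp add: continuous_map_in_subtopology)
  have sur: "f ` {0..L} = {0..M}"
    using homeomorphic_imp_surjective_map[OF h] by simp
  have inj: "inj_on f {0..L}"
    using homeomorphic_imp_injective_map[OF h] by simp
  have sm: "strict_mono_on {0..L} f"
  proof (rule strict_mono_onI)
    fix r s assume rs: "r \<in> {0..L}" "s \<in> {0..L}" "r < s"
    have a: "f r \<le> f s" using mono_onD[OF mo rs(1) rs(2)] rs(3) by simp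
    have b: "f r \<noteq> f s" using inj_onD[OF inj _ rs(1) rs(2)] rs(3) by auto
    show "f r < f s" using a b by simp
  qed
  have "0 \<in> f ` {0..L}" unfolding sur using assms by simp
  then obtain t0 where t0: "t0 \<in> {0..L}" "f t0 = 0" by (metis imageE)
  have "f 0 \<le> f t0" using mo t0 assms by (intro mono_onD[OF mo]) auto
  moreover have "f 0 \<ge> 0" using fE assms by auto
  ultimately have f0: "f 0 = 0" using t0 by simp
  have "M \<in> f ` {0..L}" unfolding sur using assms by simp
  then obtain t1 where t1: "t1 \<in> {0..L}" "f t1 = M" by (metis imageE)
  have "f t1 \<le> f L" using mo t1 assms by (intro mono_onD[OF mo]) auto
  moreover have "f L \<le> M" using fE assms by auto
  ultimately have fL: "f L = M" using t1 by simp
  show "f \<in> extensional {0..L} \<and> continuous_on {0..L} f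
     \<and> strict_mono_on {0..L} f \<and> f 0 = 0 \<and> f L = M"
    using PiE_iff fE cont sm f0 fL by blast
next
  assume "f \<in> extensional {0..L} \<and> continuous_on {0..L} f
     \<and> strict_mono_on {0..L} f \<and> f 0 = 0 \<and> f L = M"
  then have ext: "f \<in> extensional {0..L}" and cont: "continuous_on {0..L} f"
    and sm: "strict_mono_on {0..L} f" and f0: "f 0 = 0" and fL: "f L = M" by auto
  have rng: "f t \<in> {0..M}" if "t \<in> {0..L}" for t
  proof -
    have "f 0 \<le> f t" "f t \<le> f L" using that assms
      by (auto intro!: strict_mono_on_leD[OF sm])
    then show ?thesis using f0 fL by auto
  qed
  have sur: "f ` {0..L} = {0..M}"
  proof
    show "f ` {0..L} \<subseteq> {0..M}" using rng by auto
    show "{0..M} \<subseteq> f ` {0..L}"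
    proof
      fix y assume "y \<in> {0..M}"
      then obtain x where "0 \<le> x" "x \<le> L" "f x = y"
        using IVT'[of f 0 y L] cont f0 fL assms by auto
      then show "y \<in> f ` {0..L}" by force
    qed
  qed
  have h: "homeomorphic_map (top_of_set {0..L}) (top_of_set {0..M}) f"
  proof (rule continuous_imp_homeomorphic_map)
    show "continuous_map (top_of_set {0..L}) (top_of_set {0..M}) f"
      using cont rng by auto
    show "compact_space (top_of_set {0..L})"
      by (simp add: compact_space_subtopology)
    show "Hausdorff_space (top_of_set {0..M::real})"
      by (simp add: Hausdorff_space_subtopology)
    show "f ` topspace (top_of_set {0..L}) = topspace (top_of_set {0..M})"
      using sur by simp
    show "inj_on f (topspace (top_of_set {0..L}))"
      using strict_mono_on_imp_inj_on[OF sm] by simp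
  qed
  have pe: "f \<in> {0..L} \<rightarrow>\<^sub>E {0..M}" using ext rng by (simp add: PiE_iff)
  show "f \<in> Gmor L M"
    unfolding Gmor_def using pe h strict_mono_on_imp_mono_on[OF sm] by simp
qed

lemma Gtensor_apply:
  "t \<in> {0..a+b} \<Longrightarrow> Gtensor a l1 b p1 p2 t = (if t \<le> a then p1 t else p2 (t-a) + l1)"
  by (simp add: Gtensor_def)

lemma tensor_in:
  assumes a: "a > 0" and b: "b > 0" and l1: "l1 > 0" and l2: "l2 > 0"
    and p1: "p1 \<in> Gmor a l1" and p2: "p2 \<in> Gmor b l2"
  shows "Gtensor a l1 b p1 p2 \<in> Gmor (a+b) (l1+l2)"
proof -
  have c1: "continuous_on {0..a} p1" and s1: "strict_mono_on {0..a} p1"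
    and z1: "p1 0 = 0" and e1: "p1 a = l1"
    using p1 Gmor_iff[OF a l1] by auto
  have c2: "continuous_on {0..b} p2" and s2: "strict_mono_on {0..b} p2"
    and z2: "p2 0 = 0" and e2: "p2 b = l2"
    using p2 Gmor_iff[OF b l2] by auto
  define g where "g = (\<lambda>t. if t \<le> a then p1 t else p2 (t-a) + l1)"
  have eq: "\<And>t. t \<in> {0..a+b} \<Longrightarrow> Gtensor a l1 b p1 p2 t = g t"
    using Gtensor_apply g_def by simp
  have cg: "continuous_on {0..a+b} g"
    unfolding g_def
  proof (rule continuous_on_cases_le[where h="\<lambda>t. t"])
    have "{x \<in> {0..a+b}. x \<le> a} = {0..a}" using b by auto
    then show "continuous_on {x \<in> {0..a+b}. x \<le> a} p1" using c1 by simp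
    have "{x \<in> {0..a+b}. a \<le> x} = {a..a+b}" using a by auto
    moreover have "continuous_on {a..a+b} (\<lambda>t. p2 (t-a) + l1)"
    proof (intro continuous_intros)
      have i: "continuous_on {a..a+b} (\<lambda>t. t - a)" by (intro continuous_intros)
      have j: "(\<lambda>t. t - a) ` {a..a+b} \<subseteq> {0..b}" by (simp add: image_subset_iff)
      show "continuous_on {a..a+b} (\<lambda>t. p2 (t-a))"
        by (rule continuous_on_compose2[OF c2 i j])
    qed
    ultimately show "continuous_on {x \<in> {0..a+b}. a \<le> x} (\<lambda>t. p2 (t-a) + l1)" by simp
    show "continuous_on {0..a+b} (\<lambda>t. t)" by (rule continuous_on_id)
    show "\<And>x. x \<in> {0..a+b} \<Longrightarrow> x = a \<Longrightarrow> p1 x = p2 (x-a) + l1"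
      using z2 e1 by simp
  qed
  have cont: "continuous_on {0..a+b} (Gtensor a l1 b p1 p2)"
    by (rule continuous_on_eq[OF cg]) (simp add: eq)
  have le1: "p1 t \<le> l1" if "t \<in> {0..a}" for t
    using strict_mono_on_leD[OF s1 that, of a] a that e1 by simp
  have sg: "strict_mono_on {0..a+b} g"
  proof (rule strict_mono_onI)
    fix r s assume r: "r \<in> {0..a+b}" and s: "s \<in> {0..a+b}" and rs: "r < s"
    show "g r < g s"
    proof (cases "s \<le> a")
      case True
      then have "g r = p1 r" "g s = p1 s" using rs by (auto simp: g_def)
      moreover have "p1 r < p1 s"
        using strict_mono_onD[OF s1 _ _ rs] r s True rs by simp
      ultimately show ?thesis by simp
    next
      case False
      then have gs: "g s = p2 (s-a) + l1" by (simp add: g_def)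
      have "p2 0 < p2 (s-a)"
        using strict_mono_onD[OF s2, of 0 "s-a"] False s b by simp
      then have gs2: "g s > l1" using gs z2 by simp
      show ?thesis
      proof (cases "r \<le> a")
        case True
        then have "g r = p1 r" by (simp add: g_def)
        then show ?thesis using le1[of r] r True gs2 by simp
      next
        case False2: False
        then have "g r = p2 (r-a) + l1" by (simp add: g_def)
        moreover have "p2 (r-a) < p2 (s-a)"
          using strict_mono_onD[OF s2, of "r-a" "s-a"] False2 r s rs by simp
        ultimately show ?thesis using gs by simp
      qed
    qed
  qed
  have sm: "strict_mono_on {0..a+b} (Gtensor a l1 b p1 p2)"
    using sg eq by (simp add: strict_mono_on_def)
  have f0: "Gtensor a l1 b p1 p2 0 = 0" using eq[of 0] a b z1 by (simp add: g_def)
  have fL: "Gtensor a l1 b p1 p2 (a+b) = l1 + l2" using eq[of "a+b"] a b e2 by (simp add: g_def)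
  have ext: "Gtensor a l1 b p1 p2 \<in> extensional {0..a+b}" by (simp add: Gtensor_def)
  show ?thesis
    using Gmor_iff[of "a+b" "l1+l2"] a b l1 l2 ext cont sm f0 fL by simp
qed

lemma decomp:
  assumes L: "L > 0" and l1: "l1 > 0" and l2: "l2 > 0"
    and psi: "psi \<in> Gmor L (l1+l2)" and aI: "a \<in> {0..L}" and pa: "psi a = l1"
  shows "0 < a" "a < L" "restrict psi {0..a} \<in> Gmor a l1"
    "restrict (\<lambda>s. psi (s+a) - l1) {0..L-a} \<in> Gmor (L-a) l2"
    "Gtensor a l1 (L-a) (restrict psi {0..a}) (restrict (\<lambda>s. psi (s+a) - l1) {0..L-a}) = psi"
proof -
  have M: "l1 + l2 > 0" using l1 l2 by simp
  have ext: "psi \<in> extensional {0..L}" and cont: "continuous_on {0..L} psi"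
    and sm: "strict_mono_on {0..L} psi" and z: "psi 0 = 0" and e: "psi L = l1 + l2"
    using psi Gmor_iff[OF L M] by auto
  show a0: "0 < a"
  proof -
    have "a \<noteq> 0" using z pa l1 by auto
    then show ?thesis using aI by simp
  qed
  show aL: "a < L"
  proof -
    have "a \<noteq> L" using e pa l2 by auto
    then show ?thesis using aI by simp
  qed
  define p1 where "p1 = restrict psi {0..a}"
  define p2 where "p2 = restrict (\<lambda>s. psi (s+a) - l1) {0..L-a}"
  have sub1: "{0..a} \<subseteq> {0..L}" using aL by auto
  have "continuous_on {0..a} p1"
    by (rule continuous_on_eq[OF continuous_on_subset[OF cont sub1]]) (simp add: p1_def)
  moreover have "strict_mono_on {0..a} p1"
  proof (rule strict_mono_onI)
    fix r s assume r: "r \<in> {0..a}" and s: "s \<in> {0..a}" and rs: "r < s"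
    have "psi r < psi s"
      using strict_mono_onD[OF sm, of r s] r s rs sub1 by auto
    then show "p1 r < p1 s" using r s by (simp add: p1_def)
  qed
  moreover have "p1 0 = 0" "p1 a = l1" using z pa a0 by (auto simp: p1_def)
  moreover have "p1 \<in> extensional {0..a}" by (simp add: p1_def)
  ultimately show "restrict psi {0..a} \<in> Gmor a l1"
    using Gmor_iff[OF a0 l1] p1_def by simp
  have b0: "L - a > 0" using aL by simp
  have i: "continuous_on {0..L-a} (\<lambda>s. s + a)" by (intro continuous_intros)
  have j: "(\<lambda>s. s + a) ` {0..L-a} \<subseteq> {0..L}" using a0 by (simp add: image_subset_iff)
  have "continuous_on {0..L-a} (\<lambda>s. psi (s+a))"
    by (rule continuous_on_compose2[OF cont i j])
  then have "continuous_on {0..L-a} (\<lambda>s. psi (s+a) - l1)" by (intro continuous_intros)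
  then have "continuous_on {0..L-a} p2"
    by (rule continuous_on_eq) (simp add: p2_def)
  moreover have "strict_mono_on {0..L-a} p2"
  proof (rule strict_mono_onI)
    fix r s assume r: "r \<in> {0..L-a}" and s: "s \<in> {0..L-a}" and rs: "r < s"
    have "psi (r+a) < psi (s+a)"
      using strict_mono_onD[OF sm, of "r+a" "s+a"] r s rs a0 by simp
    then show "p2 r < p2 s" using r s by (simp add: p2_def)
  qed
  moreover have "p2 0 = 0" "p2 (L-a) = l2" using pa e b0 by (auto simp: p2_def)
  moreover have "p2 \<in> extensional {0..L-a}" by (simp add: p2_def)
  ultimately show "restrict (\<lambda>s. psi (s+a) - l1) {0..L-a} \<in> Gmor (L-a) l2"
    using Gmor_iff[OF b0 l2] p2_def by simp
  have "Gtensor a l1 (L-a) p1 p2 = psi"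
  proof
    fix t
    show "Gtensor a l1 (L-a) p1 p2 t = psi t"
    proof (cases "t \<in> {0..L}")
      case True
      then have tt: "t \<in> {0..a + (L-a)}" by simp
      show ?thesis
      proof (cases "t \<le> a")
        case True
        then show ?thesis using Gtensor_apply[OF tt] tt by (simp add: p1_def)
      next
        case False
        then show ?thesis using Gtensor_apply[OF tt] tt by (simp add: p2_def)
      qed
    next
      case False
      then have "psi t = undefined" using ext by (simp add: extensional_def)
      moreover have "Gtensor a l1 (L-a) p1 p2 t = undefined"
        using False by (auto simp: Gtensor_def)
      ultimately show ?thesis by simp
    qed
  qed
  then show "Gtensor a l1 (L-a) (restrict psi {0..a}) (restrict (\<lambda>s. psi (s+a) - l1) {0..L-a}) = psi"
    by (simp add: p1_def p2_def)
qed

definition GB :: "real \<Rightarrow> real \<Rightarrow> (real \<Rightarrow> real) set set" where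
  "GB L M = {{f. f ` K \<subseteq> U} | K U. compactin (top_of_set {0..L}) K \<and> openin (top_of_set {0..M}) U}"

lemma Gtop_eq: "Gtop L M = subtopology (topology_generated_by (GB L M)) (Gmor L M)"
proof -
  have "({0..L} \<rightarrow>\<^sub>E {0..M}) \<inter> Gmor L M = Gmor L M" by (auto simp: Gmor_def)
  then show ?thesis
    unfolding Gtop_def compact_open_topology_def GB_def subtopology_subtopology by simp
qed

lemma topspace_Gtop: "topspace (Gtop L M) = Gmor L M"
proof -
  have "UNIV \<in> GB L M"
  proof -
    have "UNIV = {f::real\<Rightarrow>real. f ` {} \<subseteq> {}}" by simp
    moreover have "compactin (top_of_set {0..L}) {}" "openin (top_of_set {0..M}) {}" by auto
    ultimately show ?thesis unfolding GB_def by blast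
  qed
  then have "\<Union>(GB L M) = UNIV" by blast
  then show ?thesis unfolding Gtop_eq by simp
qed

lemma Gmor_range: "p \<in> Gmor a l \<Longrightarrow> t \<in> {0..a} \<Longrightarrow> p t \<in> {0..l}"
  unfolding Gmor_def by (simp add: PiE_iff)

lemma GB_Union: "\<Union>(GB L M) = UNIV"
proof -
  have "UNIV = {f::real\<Rightarrow>real. f ` {} \<subseteq> {}}" by simp
  moreover have "compactin (top_of_set {0..L}) {}" "openin (top_of_set {0..M}) {}" by auto
  ultimately have "UNIV \<in> GB L M" unfolding GB_def by blast
  then show ?thesis by blast
qed

lemma tensor_image_iff:
  assumes a: "a > 0" and b: "b > 0" and l1: "l1 > 0" and l2: "l2 > 0"
    and p: "p \<in> Gmor a l1" and q: "q \<in> Gmor b l2" and K: "K \<subseteq> {0..a+b}"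
  shows "Gtensor a l1 b p q ` K \<subseteq> {0..l1+l2} \<inter> W \<longleftrightarrow>
     p ` (K \<inter> {0..a}) \<subseteq> {0..l1} \<inter> W \<and>
     q ` ((\<lambda>t. t - a) ` (K \<inter> {a..a+b})) \<subseteq> {0..l2} \<inter> (\<lambda>y. y + l1) -` W"
proof -
  have pa: "p a = l1" using p Gmor_iff[OF a l1] by simp
  have q0: "q 0 = 0" using q Gmor_iff[OF b l2] by simp
  have G: "Gtensor a l1 b p q \<in> Gmor (a+b) (l1+l2)" by (rule tensor_in[OF a b l1 l2 p q])
  show ?thesis
  proof
    assume H: "Gtensor a l1 b p q ` K \<subseteq> {0..l1+l2} \<inter> W"
    have 1: "p ` (K \<inter> {0..a}) \<subseteq> {0..l1} \<inter> W"
    proof (rule image_subsetI)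
      fix t assume t: "t \<in> K \<inter> {0..a}"
      then have tt: "t \<in> {0..a+b}" using K by blast
      have "Gtensor a l1 b p q t = p t" using Gtensor_apply[OF tt] t by simp
      moreover have "Gtensor a l1 b p q t \<in> W" using H t by blast
      moreover have "p t \<in> {0..l1}" using Gmor_range[OF p] t by blast
      ultimately show "p t \<in> {0..l1} \<inter> W" by simp
    qed
    have 2: "q ` ((\<lambda>t. t - a) ` (K \<inter> {a..a+b})) \<subseteq> {0..l2} \<inter> (\<lambda>y. y + l1) -` W"
    proof (rule image_subsetI)
      fix s assume "s \<in> (\<lambda>t. t - a) ` (K \<inter> {a..a+b})"
      then obtain t where t: "t \<in> K" "a \<le> t" "t \<le> a+b" and st: "s = t - a" by auto
      then have tt: "t \<in> {0..a+b}" using a by simp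
      have gt: "Gtensor a l1 b p q t \<in> W" using H t by blast
      have "q s + l1 = Gtensor a l1 b p q t"
      proof (cases "t \<le> a")
        case True
        then have "t = a" using t by simp
        then show ?thesis using Gtensor_apply[OF tt] st pa q0 by simp
      next
        case False
        then show ?thesis using Gtensor_apply[OF tt] st by simp
      qed
      then have "q s + l1 \<in> W" using gt by simp
      moreover have "q s \<in> {0..l2}" using Gmor_range[OF q] st t by simp
      ultimately show "q s \<in> {0..l2} \<inter> (\<lambda>y. y + l1) -` W" by simp
    qed
    show "p ` (K \<inter> {0..a}) \<subseteq> {0..l1} \<inter> W \<and>
     q ` ((\<lambda>t. t - a) ` (K \<inter> {a..a+b})) \<subseteq> {0..l2} \<inter> (\<lambda>y. y + l1) -` W"
      using 1 2 by simp
  next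
    assume H: "p ` (K \<inter> {0..a}) \<subseteq> {0..l1} \<inter> W \<and>
     q ` ((\<lambda>t. t - a) ` (K \<inter> {a..a+b})) \<subseteq> {0..l2} \<inter> (\<lambda>y. y + l1) -` W"
    show "Gtensor a l1 b p q ` K \<subseteq> {0..l1+l2} \<inter> W"
    proof (rule image_subsetI)
      fix t assume t: "t \<in> K"
      then have tt: "t \<in> {0..a+b}" using K by blast
      have r: "Gtensor a l1 b p q t \<in> {0..l1+l2}" using Gmor_range[OF G tt] .
      have "Gtensor a l1 b p q t \<in> W"
      proof (cases "t \<le> a")
        case True
        then have "t \<in> K \<inter> {0..a}" using t tt by simp
        then have "p t \<in> W" using H by blast
        then show ?thesis using Gtensor_apply[OF tt] True by simp
      next
        case False
        then have "t - a \<in> (\<lambda>t. t - a) ` (K \<inter> {a..a+b})" using t tt by auto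
        then have "q (t - a) + l1 \<in> W" using H by blast
        then show ?thesis using Gtensor_apply[OF tt] False by simp
      qed
      then show "Gtensor a l1 b p q t \<in> {0..l1+l2} \<inter> W" using r by simp
    qed
  qed
qed

lemma basic_open_Gtop:
  assumes "compactin (top_of_set {0..L}) K" "openin (top_of_set {0..M}) U"
  shows "openin (Gtop L M) ({f. f ` K \<subseteq> U} \<inter> Gmor L M)"
proof -
  have "{f. f ` K \<subseteq> U} \<in> GB L M" using assms unfolding GB_def by blast
  then have "openin (topology_generated_by (GB L M)) {f. f ` K \<subseteq> U}"
    by (rule topology_generated_by_Basis)
  then show ?thesis unfolding Gtop_eq by (rule openin_subtopology_Int)
qed

lemma comp_cont:
  assumes a: "a > 0" and b: "b > 0" and l1: "l1 > 0" and l2: "l2 > 0"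
  shows "continuous_map (prod_topology (Gtop a l1) (Gtop b l2)) (Gtop (a+b) (l1+l2))
           (\<lambda>(p, q). Gtensor a l1 b p q)"
proof -
  let ?P = "prod_topology (Gtop a l1) (Gtop b l2)"
  let ?g = "\<lambda>(p, q). Gtensor a l1 b p q"
  have tsP: "topspace ?P = Gmor a l1 \<times> Gmor b l2" by (simp add: topspace_Gtop)
  have into: "?g \<in> topspace ?P \<rightarrow> Gmor (a+b) (l1+l2)"
    using tensor_in[OF a b l1 l2] tsP by auto
  have opn: "openin ?P (?g -` U \<inter> topspace ?P)" if U: "U \<in> GB (a+b) (l1+l2)" for U
  proof -
    obtain K V where UKV: "U = {f. f ` K \<subseteq> V}" and Kc: "compactin (top_of_set {0..a+b}) K"
      and Vo: "openin (top_of_set {0..l1+l2}) V"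
      using U unfolding GB_def by blast
    have cK: "compact K" and Ksub: "K \<subseteq> {0..a+b}"
      using Kc by (auto simp: compactin_subtopology)
    obtain W where W: "open W" and VW: "V = {0..l1+l2} \<inter> W" using Vo openin_open by metis
    define K1 where "K1 = K \<inter> {0..a}"
    define K2 where "K2 = (\<lambda>t. t - a) ` (K \<inter> {a..a+b})"
    define V1 where "V1 = {0..l1} \<inter> W"
    define V2 where "V2 = {0..l2} \<inter> (\<lambda>y. y + l1) -` W"
    have K1c: "compactin (top_of_set {0..a}) K1"
      unfolding K1_def compactin_subtopology using cK by auto
    have "compact (K \<inter> {a..a+b})" using cK by auto
    then have "compact K2" unfolding K2_def
      by (rule compact_continuous_image[rotated]) (intro continuous_intros)
    moreover have "K2 \<subseteq> {0..b}" unfolding K2_def by auto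
    ultimately have K2c: "compactin (top_of_set {0..b}) K2"
      by (simp add: compactin_subtopology)
    have V1o: "openin (top_of_set {0..l1}) V1"
      unfolding V1_def openin_open using W by blast
    have "open ((\<lambda>y. y + l1) -` W)"
      by (rule continuous_open_vimage[OF W]) (intro continuous_intros)
    then have V2o: "openin (top_of_set {0..l2}) V2"
      unfolding V2_def openin_open by blast
    have mem: "(p, q) \<in> ?g -` U \<inter> topspace ?P \<longleftrightarrow>
         (p, q) \<in> ({p. p ` K1 \<subseteq> V1} \<inter> Gmor a l1) \<times> ({q. q ` K2 \<subseteq> V2} \<inter> Gmor b l2)"
      for p q
    proof (cases "p \<in> Gmor a l1 \<and> q \<in> Gmor b l2")
      case True
      then have pq: "p \<in> Gmor a l1" "q \<in> Gmor b l2" by auto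
      have ti: "Gtensor a l1 b p q ` K \<subseteq> V \<longleftrightarrow> p ` K1 \<subseteq> V1 \<and> q ` K2 \<subseteq> V2"
        unfolding VW K1_def K2_def V1_def V2_def
        by (rule tensor_image_iff[OF a b l1 l2 pq Ksub])
      have l: "(p, q) \<in> ?g -` U \<inter> topspace ?P \<longleftrightarrow> Gtensor a l1 b p q ` K \<subseteq> V"
        using pq by (simp add: UKV topspace_Gtop)
      show ?thesis unfolding l ti using pq by simp
    next
      case False
      then show ?thesis by (auto simp: topspace_Gtop)
    qed
    have eq: "?g -` U \<inter> topspace ?P =
      ({p. p ` K1 \<subseteq> V1} \<inter> Gmor a l1) \<times> ({q. q ` K2 \<subseteq> V2} \<inter> Gmor b l2)"
    proof (rule set_eqI)
      fix x :: "(real \<Rightarrow> real) \<times> (real \<Rightarrow> real)"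
      show "x \<in> ?g -` U \<inter> topspace ?P \<longleftrightarrow>
         x \<in> ({p. p ` K1 \<subseteq> V1} \<inter> Gmor a l1) \<times> ({q. q ` K2 \<subseteq> V2} \<inter> Gmor b l2)"
        using mem[of "fst x" "snd x"] by simp
    qed
    have o1: "openin (Gtop a l1) ({p. p ` K1 \<subseteq> V1} \<inter> Gmor a l1)"
      by (rule basic_open_Gtop[OF K1c V1o])
    have o2: "openin (Gtop b l2) ({q. q ` K2 \<subseteq> V2} \<inter> Gmor b l2)"
      by (rule basic_open_Gtop[OF K2c V2o])
    show ?thesis unfolding eq openin_prod_Times_iff using o1 o2 by blast
  qed
  have "continuous_map ?P (topology_generated_by (GB (a+b) (l1+l2))) ?g"
    unfolding continuous_on_generated_topo_iff GB_Union using opn by blast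
  then show ?thesis unfolding Gtop_eq[of "a+b"] continuous_map_in_subtopology using into by blast
qed

lemma nbhd:
  assumes cont: "continuous_on {0..L} psi" and rng: "psi ` {0..L} \<subseteq> {0..M}"
    and gen: "generate_topology_on (GB L M) W"
  shows "psi \<in> W \<longrightarrow> (\<exists>e>0. \<forall>f. (\<forall>t\<in>{0..L}. f t \<in> {0..M} \<and> \<bar>f t - psi t\<bar> < e) \<longrightarrow> f \<in> W)"
  using gen
proof (induction rule: generate_topology_on.induct)
  case Empty
  then show ?case by simp
next
  case (Int a b)
  show ?case
  proof
    assume "psi \<in> a \<inter> b"
    then obtain e1 e2 where e1: "e1 > 0" "\<forall>f. (\<forall>t\<in>{0..L}. f t \<in> {0..M} \<and> \<bar>f t - psi t\<bar> < e1) \<longrightarrow> f \<in> a"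
      and e2: "e2 > 0" "\<forall>f. (\<forall>t\<in>{0..L}. f t \<in> {0..M} \<and> \<bar>f t - psi t\<bar> < e2) \<longrightarrow> f \<in> b"
      using Int.IH by blast
    show "\<exists>e>0. \<forall>f. (\<forall>t\<in>{0..L}. f t \<in> {0..M} \<and> \<bar>f t - psi t\<bar> < e) \<longrightarrow> f \<in> a \<inter> b"
    proof (intro exI[of _ "min e1 e2"] conjI allI impI)
      show "min e1 e2 > 0" using e1 e2 by simp
      fix f assume H: "\<forall>t\<in>{0..L}. f t \<in> {0..M} \<and> \<bar>f t - psi t\<bar> < min e1 e2"
      have "f \<in> a" using e1(2) H by simp
      moreover have "f \<in> b" using e2(2) H by simp
      ultimately show "f \<in> a \<inter> b" by simp
    qed
  qed
next
  case (UN K)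
  show ?case
  proof
    assume "psi \<in> \<Union>K"
    then obtain k where k: "k \<in> K" "psi \<in> k" by blast
    then obtain e where e: "e > 0" "\<forall>f. (\<forall>t\<in>{0..L}. f t \<in> {0..M} \<and> \<bar>f t - psi t\<bar> < e) \<longrightarrow> f \<in> k"
      using UN.IH by blast
    show "\<exists>e>0. \<forall>f. (\<forall>t\<in>{0..L}. f t \<in> {0..M} \<and> \<bar>f t - psi t\<bar> < e) \<longrightarrow> f \<in> \<Union>K"
      using e k by blast
  qed
next
  case (Basis s)
  show ?case
  proof
    assume ps: "psi \<in> s"
    obtain K U where sKU: "s = {f. f ` K \<subseteq> U}" and Kc: "compactin (top_of_set {0..L}) K"
      and Uo: "openin (top_of_set {0..M}) U"
      using Basis unfolding GB_def by blast
    have cK: "compact K" and Ksub: "K \<subseteq> {0..L}"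
      using Kc by (auto simp: compactin_subtopology)
    obtain V where V: "open V" and UV: "U = {0..M} \<inter> V" using Uo openin_open by metis
    have "compact (psi ` K)"
      by (rule compact_continuous_image[OF continuous_on_subset[OF cont Ksub] cK])
    moreover have "psi ` K \<subseteq> V" using ps sKU UV by auto
    ultimately obtain e where e: "e > 0" "(\<Union>x\<in>psi ` K. ball x e) \<subseteq> V"
      using compact_subset_open_imp_ball_epsilon_subset[OF _ V] by metis
    show "\<exists>e>0. \<forall>f. (\<forall>t\<in>{0..L}. f t \<in> {0..M} \<and> \<bar>f t - psi t\<bar> < e) \<longrightarrow> f \<in> s"
    proof (intro exI[of _ e] conjI allI impI)
      show "e > 0" by (rule e(1))
      fix f assume H: "\<forall>t\<in>{0..L}. f t \<in> {0..M} \<and> \<bar>f t - psi t\<bar> < e"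
      have "f t \<in> U" if t: "t \<in> K" for t
      proof -
        have t2: "t \<in> {0..L}" using t Ksub by blast
        have "f t \<in> ball (psi t) e" using H t2 by (simp add: dist_real_def abs_minus_commute)
        then have "f t \<in> V" using e(2) t by blast
        then show ?thesis using H t2 UV by simp
      qed
      then show "f \<in> s" using sKU by auto
    qed
  qed
qed

lemma pert:
  assumes L: "L > 0" and M: "M > 0" and e: "e > 0" and u: "0 < u" "u < 1"
  shows "\<exists>f\<in>Gmor L M. (\<forall>t\<in>{0..L}. \<bar>f t - M / L * t\<bar> < e) \<and> f (L*u) \<noteq> M*u"
proof -
  define s where "s = min (1/2) (e/(2*M))"
  have s0: "s > 0" using e M by (simp add: s_def)
  have s1: "s < 1" by (simp add: s_def)
  have sM: "s * M \<le> e/2" using M by (simp add: s_def min_def field_simps)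
  define g where "g = (\<lambda>t. (1-s)*(M/L)*t + s*M*(t/L)^2)"
  define f where "f = restrict g {0..L}"
  have fg: "t \<in> {0..L} \<Longrightarrow> f t = g t" for t by (simp add: f_def)
  have "continuous_on {0..L} g" unfolding g_def using L by (intro continuous_intros) auto
  then have cf: "continuous_on {0..L} f" by (rule continuous_on_eq) (simp add: fg)
  have smg: "g r < g t" if "0 \<le> r" "r < t" for r t
  proof -
    have c: "(1-s)*(M/L) > 0" using s1 M L by simp
    have "(1-s)*(M/L)*r < (1-s)*(M/L)*t" by (rule mult_strict_left_mono[OF that(2) c])
    moreover have "(r/L)^2 \<le> (t/L)^2"
      using that L by (intro power_mono) (auto simp: divide_right_mono)
    moreover have "s*M \<ge> 0" using s0 M by simp
    ultimately show ?thesis unfolding g_def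
      by (smt (verit) mult_left_mono)
  qed
  have sm: "strict_mono_on {0..L} f"
    by (rule strict_mono_onI) (simp add: fg smg)
  have f0: "f 0 = 0" using L by (simp add: fg g_def)
  have fL: "f L = M" using L by (simp add: fg g_def field_simps)
  have fG: "f \<in> Gmor L M"
    using Gmor_iff[OF L M] cf sm f0 fL by (simp add: f_def)
  have close: "\<bar>f t - M / L * t\<bar> < e" if t: "t \<in> {0..L}" for t
  proof -
    define x where "x = t / L"
    have x0: "0 \<le> x" and x1: "x \<le> 1" using t L by (auto simp: x_def field_simps)
    have "f t - M / L * t = s*M*(x^2 - x)"
      using t L by (simp add: fg g_def x_def field_simps power2_eq_square)
    moreover have "\<bar>x^2 - x\<bar> \<le> 1"
    proof -
      have xx: "x*x \<le> x" using mult_left_mono[OF x1 x0] by simp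
      have "0 \<le> x*x" by simp
      then show ?thesis using xx x0 x1 unfolding power2_eq_square abs_le_iff by linarith
    qed
    ultimately have "\<bar>f t - M / L * t\<bar> \<le> s*M"
      using s0 M by (simp add: abs_mult mult_left_le)
    then show ?thesis using sM e by simp
  qed
  have "f (L*u) = M*u - s*M*u*(1-u)"
    using L u by (simp add: fg g_def field_simps power2_eq_square)
  moreover have "s*M*u*(1-u) > 0" using s0 M u by simp
  ultimately have "f (L*u) \<noteq> M*u" by linarith
  then show ?thesis using fG close by blast
qed

theorem proposition4p6:
  fixes L l1 l2 :: real
  assumes "L > 0" and "l1 > 0" and "l2 > 0"
  defines "X \<equiv> sum_topology (\<lambda>(a, b). prod_topology (Gtop a l1) (Gtop b l2))
            {(a, b). a > 0 \<and> b > 0 \<and> a + b = L}"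
    and "F \<equiv> (\<lambda>((a, b), (phi1, phi2)). Gtensor a l1 b phi1 phi2)"
  shows "continuous_map X (Gtop L (l1 + l2)) F
    \<and> bij_betw F (topspace X) (topspace (Gtop L (l1 + l2)))
    \<and> \<not> homeomorphic_map X (Gtop L (l1 + l2)) F"
proof -
  have L: "L > 0" and l1: "l1 > 0" and l2: "l2 > 0" using assms by auto
  have M: "l1 + l2 > 0" using l1 l2 by simp
  define I where "I = {(a, b). a > 0 \<and> b > 0 \<and> a + b = (L::real)}"
  define Xi where "Xi = (\<lambda>(a, b). prod_topology (Gtop a l1) (Gtop b l2))"
  have XI: "X = sum_topology Xi I" unfolding X_def Xi_def I_def ..
  have Xiab: "Xi (a, b) = prod_topology (Gtop a l1) (Gtop b l2)" for a b
    by (simp add: Xi_def)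
  have memX: "((a, b), (p, q)) \<in> topspace X \<longleftrightarrow>
      a > 0 \<and> b > 0 \<and> a + b = L \<and> p \<in> Gmor a l1 \<and> q \<in> Gmor b l2" for a b p q
    by (simp add: XI Xiab I_def topspace_Gtop)
  have Fapp: "F ((a, b), (p, q)) = Gtensor a l1 b p q" for a b p q
    by (simp add: F_def)
  have tsY: "topspace (Gtop L (l1+l2)) = Gmor L (l1+l2)" by (rule topspace_Gtop)
  have zform: "\<exists>a b p q. z = ((a, b), (p, q))" for z :: "(real \<times> real) \<times> (real \<Rightarrow> real) \<times> (real \<Rightarrow> real)"
    by (metis prod.collapse)
  have into: "F z \<in> Gmor L (l1+l2)" if z: "z \<in> topspace X" for z
  proof -
    obtain a b p q where zz: "z = ((a, b), (p, q))" using zform by blast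
    then have h: "a > 0" "b > 0" "a + b = L" "p \<in> Gmor a l1" "q \<in> Gmor b l2"
      using z memX by auto
    show ?thesis using tensor_in[OF h(1) h(2) l1 l2 h(4) h(5)] h(3) zz Fapp by simp
  qed
  have cont: "continuous_map X (Gtop L (l1 + l2)) F"
    unfolding continuous_map_def
  proof (intro conjI allI impI)
    show "F \<in> topspace X \<rightarrow> topspace (Gtop L (l1 + l2))" using into tsY by auto
    fix U assume U: "openin (Gtop L (l1 + l2)) U"
    show "openin X {x \<in> topspace X. F x \<in> U}"
      unfolding XI openin_sum_topology
    proof (intro conjI ballI)
      show "{x \<in> topspace (sum_topology Xi I). F x \<in> U} \<subseteq> Sigma I (topspace \<circ> Xi)"
        by auto
      fix i assume i: "i \<in> I"
      obtain a b where iab: "i = (a, b)" by (cases i)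
      have ab: "a > 0" "b > 0" "a + b = L" using i iab I_def by auto
      let ?P = "prod_topology (Gtop a l1) (Gtop b l2)"
      let ?g = "\<lambda>(p, q). Gtensor a l1 b p q"
      have cg: "continuous_map ?P (Gtop L (l1+l2)) ?g"
        using comp_cont[OF ab(1) ab(2) l1 l2] ab(3) by simp
      have o: "openin ?P {x \<in> topspace ?P. ?g x \<in> U}"
        using cg U unfolding continuous_map_def by blast
      have eq: "{x. (i, x) \<in> {x \<in> topspace (sum_topology Xi I). F x \<in> U}} =
              {x \<in> topspace ?P. ?g x \<in> U}"
      proof (rule set_eqI)
        fix x :: "(real \<Rightarrow> real) \<times> (real \<Rightarrow> real)"
        obtain p q where x: "x = (p, q)" by (cases x)
        show "x \<in> {x. (i, x) \<in> {x \<in> topspace (sum_topology Xi I). F x \<in> U}} \<longleftrightarrow>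
              x \<in> {x \<in> topspace ?P. ?g x \<in> U}"
          using i by (simp add: x iab Fapp Xiab)
      qed
      show "openin (Xi i) {x. (i, x) \<in> {x \<in> topspace (sum_topology Xi I). F x \<in> U}}"
        by (subst eq) (simp only: iab Xiab o)
    qed
  qed
  have surj: "F ` topspace X = Gmor L (l1+l2)"
  proof
    show "F ` topspace X \<subseteq> Gmor L (l1+l2)" using into by auto
    show "Gmor L (l1+l2) \<subseteq> F ` topspace X"
    proof
      fix psi assume psi: "psi \<in> Gmor L (l1+l2)"
      have cps: "continuous_on {0..L} psi" and z: "psi 0 = 0" and e: "psi L = l1 + l2"
        using psi Gmor_iff[OF L M] by auto
      obtain a where a: "0 \<le> a" "a \<le> L" "psi a = l1"
        using IVT'[of psi 0 l1 L] cps z e l1 l2 L by auto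
      have aI: "a \<in> {0..L}" using a by simp
      note d = decomp[OF L l1 l2 psi aI a(3)]
      let ?z = "((a, L - a), (restrict psi {0..a}, restrict (\<lambda>s. psi (s+a) - l1) {0..L-a}))"
      have "?z \<in> topspace X" using d memX by simp
      moreover have "F ?z = psi" using d(5) Fapp by simp
      ultimately show "psi \<in> F ` topspace X" by (metis image_eqI)
    qed
  qed
  have inj: "inj_on F (topspace X)"
  proof (rule inj_onI)
    fix z1 z2 assume z1: "z1 \<in> topspace X" and z2: "z2 \<in> topspace X" and eqF: "F z1 = F z2"
    obtain a b p q where zz1: "z1 = ((a, b), (p, q))" using zform by blast
    obtain a' b' p' q' where zz2: "z2 = ((a', b'), (p', q'))" using zform by blast
    have h: "a > 0" "b > 0" "a + b = L" "p \<in> Gmor a l1" "q \<in> Gmor b l2"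
      using z1 memX zz1 by auto
    have h': "a' > 0" "b' > 0" "a' + b' = L" "p' \<in> Gmor a' l1" "q' \<in> Gmor b' l2"
      using z2 memX zz2 by auto
    define G where "G = F z1"
    have GG: "G \<in> Gmor L (l1+l2)" using into z1 G_def by simp
    have smG: "strict_mono_on {0..L} G" using GG Gmor_iff[OF L M] by simp
    have G1: "G = Gtensor a l1 b p q" using G_def zz1 Fapp by simp
    have G2: "G = Gtensor a' l1 b' p' q'" using G_def eqF zz2 Fapp by simp
    have pa: "p a = l1" using h(4) Gmor_iff[OF h(1) l1] by simp
    have pa': "p' a' = l1" using h'(4) Gmor_iff[OF h'(1) l1] by simp
    have q0: "q 0 = 0" using h(5) Gmor_iff[OF h(2) l2] by simp
    have q0': "q' 0 = 0" using h'(5) Gmor_iff[OF h'(2) l2] by simp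
    have Ga: "G a = l1" using G1 Gtensor_apply[of a a b l1 p q] h pa by simp
    have Ga': "G a' = l1" using G2 Gtensor_apply[of a' a' b' l1 p' q'] h' pa' by simp
    have aL: "a \<in> {0..L}" "a' \<in> {0..L}" using h h' by auto
    have "a = a'"
      using inj_onD[OF strict_mono_on_imp_inj_on[OF smG] _ aL] Ga Ga' by simp
    moreover then have "b = b'" using h(3) h'(3) by simp
    moreover have "p = p'"
    proof (rule extensionalityI)
      show "p \<in> extensional {0..a}" using h(4) Gmor_iff[OF h(1) l1] by simp
      show "p' \<in> extensional {0..a}" using h'(4) Gmor_iff[OF h'(1) l1] \<open>a = a'\<close> by simp
      fix t assume t: "t \<in> {0..a}"
      then have "G t = p t" using G1 Gtensor_apply[of t a b l1 p q] h by simp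
      moreover have "G t = p' t" using t G2 Gtensor_apply[of t a' b' l1 p' q'] h' \<open>a = a'\<close> by simp
      ultimately show "p t = p' t" by simp
    qed
    moreover have "q = q'"
    proof (rule extensionalityI)
      show "q \<in> extensional {0..b}" using h(5) Gmor_iff[OF h(2) l2] by simp
      show "q' \<in> extensional {0..b}" using h'(5) Gmor_iff[OF h'(2) l2] \<open>b = b'\<close> by simp
      fix s assume s: "s \<in> {0..b}"
      show "q s = q' s"
      proof (cases "s = 0")
        case True
        then show ?thesis using q0 q0' by simp
      next
        case False
        then have s0: "s > 0" using s by simp
        have "G (s + a) = q s + l1" using G1 Gtensor_apply[of "s+a" a b l1 p q] h s s0 by simp
        moreover have "G (s + a) = q' s + l1"
          using G2 Gtensor_apply[of "s+a" a' b' l1 p' q'] h' s s0 \<open>a = a'\<close> \<open>b = b'\<close> by simp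
        ultimately show ?thesis by simp
      qed
    qed
    ultimately show "z1 = z2" using zz1 zz2 by simp
  qed
  have bij: "bij_betw F (topspace X) (topspace (Gtop L (l1 + l2)))"
    unfolding bij_betw_def tsY using inj surj by simp
  have nh: "\<not> homeomorphic_map X (Gtop L (l1 + l2)) F"
  proof
    assume hm: "homeomorphic_map X (Gtop L (l1 + l2)) F"
    define u where "u = l1 / (l1 + l2)"
    have u: "0 < u" "u < 1" using l1 l2 by (auto simp: u_def field_simps)
    define a0 where "a0 = L * u"
    have a0: "0 < a0" "a0 < L" using u L by (auto simp: a0_def)
    define i0 where "i0 = (a0, L - a0)"
    have i0I: "i0 \<in> I" using a0 by (simp add: i0_def I_def)
    define S where "S = Sigma I (\<lambda>i. if i = i0 then topspace (Xi i) else {})"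
    have So: "openin X S" unfolding XI S_def openin_disjoint_union by auto
    have FSo: "openin (Gtop L (l1 + l2)) (F ` S)"
      using homeomorphic_imp_open_map[OF hm] So by (simp add: open_map_def)
    have FS: "psi a0 = l1" if ps: "psi \<in> F ` S" for psi
    proof -
      obtain z where z0: "psi = F z" "z \<in> S" using ps by (rule imageE)
      then have z: "z \<in> S" "psi = F z" by auto
      obtain a b p q where zz: "z = ((a, b), (p, q))" using zform by blast
      have pqS: "(p, q) \<in> (if (a, b) = i0 then topspace (Xi (a, b)) else {})"
        using z(1) zz S_def by simp
      have ai: "(a, b) = i0"
      proof (rule ccontr)
        assume "(a, b) \<noteq> i0"
        then show False using pqS by simp
      qed
      then have ab: "a = a0" "b = L - a0" using i0_def by auto
      have "z \<in> topspace X" using z(1) ai unfolding S_def XI by (auto split: if_splits)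
      then have h: "p \<in> Gmor a l1" "q \<in> Gmor b l2" using zz memX by auto
      have pa: "p a = l1" using h(1) Gmor_iff[of a l1] a0 ab l1 by simp
      show ?thesis using z zz Fapp Gtensor_apply[of a0 a0 b l1 p q] pa ab a0 by simp
    qed
    define psi0 where "psi0 = restrict (\<lambda>t. (l1+l2) / L * t) {0..L}"
    have cps0: "continuous_on {0..L} psi0"
    proof (rule continuous_on_eq[of _ "\<lambda>t. (l1+l2) / L * t"])
      show "continuous_on {0..L} (\<lambda>t. (l1+l2) / L * t)" by (intro continuous_intros)
      show "\<And>x. x \<in> {0..L} \<Longrightarrow> (l1+l2) / L * x = psi0 x" by (simp add: psi0_def)
    qed
    have psi0G: "psi0 \<in> Gmor L (l1+l2)"
    proof -
      have "strict_mono_on {0..L} psi0"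
      proof (rule strict_mono_onI)
        fix r s assume r: "r \<in> {0..L}" and s: "s \<in> {0..L}" and rs: "r < s"
        have c: "(l1+l2) / L > 0" using L M by simp
        have "(l1+l2) / L * r < (l1+l2) / L * s" by (rule mult_strict_left_mono[OF rs c])
        then show "psi0 r < psi0 s" using r s by (simp add: psi0_def)
      qed
      then show ?thesis using Gmor_iff[OF L M] cps0 L by (simp add: psi0_def)
    qed
    have psa0: "psi0 a0 = l1"
    proof -
      have "psi0 a0 = (l1+l2) / L * (L * u)" using a0 u by (simp add: psi0_def a0_def)
      also have "\<dots> = (l1+l2) * u" using L by simp
      also have "\<dots> = l1" using M by (simp add: u_def)
      finally show ?thesis .
    qed
    have "psi0 \<in> F ` S"
    proof -
      have aI: "a0 \<in> {0..L}" using a0 by simp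
      note d = decomp[OF L l1 l2 psi0G aI psa0]
      let ?z = "((a0, L - a0), (restrict psi0 {0..a0}, restrict (\<lambda>s. psi0 (s+a0) - l1) {0..L-a0}))"
      have "?z \<in> topspace X" using d memX by simp
      then have "?z \<in> S" using i0I unfolding S_def XI i0_def by simp
      moreover have "F ?z = psi0" using d(5) Fapp by simp
      ultimately show ?thesis by (metis image_eqI)
    qed
    obtain T where T: "openin (topology_generated_by (GB L (l1+l2))) T"
      and FST: "F ` S = T \<inter> Gmor L (l1+l2)"
      using FSo unfolding Gtop_eq openin_subtopology by blast
    have psi0T: "psi0 \<in> T" using \<open>psi0 \<in> F ` S\<close> FST by blast
    have rng0: "psi0 ` {0..L} \<subseteq> {0..l1+l2}" using Gmor_range[OF psi0G] by blast
    obtain e where e: "e > 0"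
      and eT: "\<forall>f. (\<forall>t\<in>{0..L}. f t \<in> {0..l1+l2} \<and> \<bar>f t - psi0 t\<bar> < e) \<longrightarrow> f \<in> T"
      using nbhd[OF cps0 rng0 openin_topology_generated_by[OF T]] psi0T by blast
    obtain f where fG: "f \<in> Gmor L (l1+l2)" and fc: "\<forall>t\<in>{0..L}. \<bar>f t - (l1+l2) / L * t\<bar> < e"
      and fne: "f (L*u) \<noteq> (l1+l2)*u"
      using pert[OF L M e u] by blast
    have "\<forall>t\<in>{0..L}. f t \<in> {0..l1+l2} \<and> \<bar>f t - psi0 t\<bar> < e"
      using fc Gmor_range[OF fG] by (simp add: psi0_def)
    then have "f \<in> T" using eT by blast
    then have "f \<in> F ` S" using FST fG by blast
    then have "f a0 = l1" by (rule FS)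
    moreover have "(l1+l2)*u = l1" using M by (simp add: u_def)
    ultimately show False using fne a0_def by simp
  qed
  show ?thesis using cont bij nh by blast
qed


end
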